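(* Let $\Omega_D := \{x \in \mathbb{R}^2 : |x| \le 1\}$ and $\Omega_S := [-1,1]\times[0,2\pi)$. Let $\mathcal{E} \in C^2(\mathbb{R})$ satisfy $\mathcal{E}(x) = \exp(-x)$ for all $x \ge 0$, with $|\mathcal{E}|$, $|\mathcal{E}'|$ and $|\mathcal{E}''|$ bounded on $\mathbb{R}$. Let $w \in L_1(\mathbb{R}) \cap L_2(\mathbb{R})$ and let $F : L_2(\Omega_D) \to L_2(\Omega_S)$ be defined by $$F(f)(s,\theta) := \int_{\mathbb{R}} w(r-s)\, \mathcal{E}\Big(\tfrac{1}{2}(Rf)(r,\theta)\Big)\, dr,$$ whose Fréchet derivative at $f \in L_2(\Omega_D)$ is the bounded linear operator $$(F'(f)h)(s,\theta) = \frac{1}{2}\int_{\mathbb{R}} w(r-s)\, \mathcal{E}'\Big(\tfrac{1}{2}(Rf)(r,\theta)\Big)\, (Rh)(r,\theta)\, dr.$$ Then for every $f \in L_2(\Omega_D)$ and $g \in L_2(\Omega_S)$, the Hilbert-space adjoint $F'(f)^* : L_2(\Omega_S) \to L_2(\Omega_D)$ is given by $$(F'(f)^* g)(x,y) = R^*\Big( \tfrac{1}{2}\, \mathcal{E}'\Big(\tfrac{1}{2}(Rf)(s,\theta)\Big) \int_{-1}^{1} w(s-r)\, g(r,\theta)\, dr \Big)(x,y),$$ where the function to which $R^*$ is applied is regarded as a function of the variables $(s,\theta) \in \Omega_S$.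
   Context: Functions $f \in L_2(\Omega_D)$ are extended by zero outside $\Omega_D$. The Radon transform is $(Rf)(s,\theta) = \int_{\mathbb{R}} f(s\,u(\theta) + \sigma\, u(\theta)^\perp)\, d\sigma$ for $s \in \mathbb{R}$, $\theta \in [0,2\pi)$, where $u(\theta) = (\cos\theta, \sin\theta)^T$ and $u(\theta)^\perp$ is the unit vector perpendicular to it. $R : L_2(\Omega_D) \to L_2(\Omega_S)$ is a bounded linear operator with $(Rf)(s,\theta)=0$ for $|s|>1$, and $R^* : L_2(\Omega_S) \to L_2(\Omega_D)$ denotes its adjoint with respect to the $L_2$ inner products. *)

theory Defs
  imports "HOL-Analysis.Analysis"
begin

definition OmegaD :: "(real \<times> real) set" where
  "OmegaD = {x. (fst x)\<^sup>2 + (snd x)\<^sup>2 \<le> 1}"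

definition OmegaS :: "(real \<times> real) set" where
  "OmegaS = {-1..1} \<times> {0..<2*pi}"

text \<open>Elements of L2(Omega_D) / L2(Omega_S), represented by functions extended by zero.\<close>

definition L2D :: "(real \<times> real \<Rightarrow> real) \<Rightarrow> bool" where
  "L2D f \<longleftrightarrow> f \<in> borel_measurable lborel \<and> (\<forall>x. x \<notin> OmegaD \<longrightarrow> f x = 0)
      \<and> integrable lborel (\<lambda>x. (f x)\<^sup>2)"

definition L2S :: "(real \<times> real \<Rightarrow> real) \<Rightarrow> bool" where
  "L2S g \<longleftrightarrow> g \<in> borel_measurable lborel \<and> (\<forall>x. x \<notin> OmegaS \<longrightarrow> g x = 0)
      \<and> integrable lborel (\<lambda>x. (g x)\<^sup>2)"

definition innerD :: "(real \<times> real \<Rightarrow> real) \<Rightarrow> (real \<times> real \<Rightarrow> real) \<Rightarrow> real" where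
  "innerD f h = (LINT x:OmegaD|lborel. f x * h x)"

definition innerS :: "(real \<times> real \<Rightarrow> real) \<Rightarrow> (real \<times> real \<Rightarrow> real) \<Rightarrow> real" where
  "innerS g k = (LINT x:OmegaS|lborel. g x * k x)"

text \<open>Radon transform: (Rf)(s,theta) = int f(s u(theta) + sigma u(theta)^perp) dsigma,
  with u(theta) = (cos theta, sin theta), u(theta)^perp = (-sin theta, cos theta).
  As a map into L2(Omega_S) it is represented by its restriction to Omega_S (extended by zero);
  note (Rf)(s,theta) = 0 for |s| > 1 anyway, since f vanishes outside the unit disk.\<close>

definition Radon :: "(real \<times> real \<Rightarrow> real) \<Rightarrow> (real \<times> real \<Rightarrow> real)" where
  "Radon f = (\<lambda>(s, \<theta>). if (s, \<theta>) \<in> OmegaS then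
      (LINT \<sigma>|lborel. f (s * cos \<theta> - \<sigma> * sin \<theta>, s * sin \<theta> + \<sigma> * cos \<theta>)) else 0)"

definition is_adjoint ::
  "((real \<times> real \<Rightarrow> real) \<Rightarrow> (real \<times> real \<Rightarrow> real)) \<Rightarrow>
   ((real \<times> real \<Rightarrow> real) \<Rightarrow> (real \<times> real \<Rightarrow> real)) \<Rightarrow> bool" where
  "is_adjoint T Tstar \<longleftrightarrow>
     (\<forall>g. L2S g \<longrightarrow> L2D (Tstar g)) \<and>
     (\<forall>h g. L2D h \<longrightarrow> L2S g \<longrightarrow> innerS (T h) g = innerD h (Tstar g))"

definition Fop :: "(real \<Rightarrow> real) \<Rightarrow> (real \<Rightarrow> real) \<Rightarrow> (real \<times> real \<Rightarrow> real) \<Rightarrow> (real \<times> real \<Rightarrow> real)" where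
  "Fop E w f = (\<lambda>(s, \<theta>). if (s, \<theta>) \<in> OmegaS then
      (LINT r|lborel. w (r - s) * E ((1/2) * Radon f (r, \<theta>))) else 0)"

definition Fderiv :: "(real \<Rightarrow> real) \<Rightarrow> (real \<Rightarrow> real) \<Rightarrow> (real \<times> real \<Rightarrow> real) \<Rightarrow>
    (real \<times> real \<Rightarrow> real) \<Rightarrow> (real \<times> real \<Rightarrow> real)" where
  "Fderiv E w f h = (\<lambda>(s, \<theta>). if (s, \<theta>) \<in> OmegaS then
      (1/2) * (LINT r|lborel. w (r - s) * deriv E ((1/2) * Radon f (r, \<theta>)) * Radon h (r, \<theta>))
    else 0)"

definition adj_arg :: "(real \<Rightarrow> real) \<Rightarrow> (real \<Rightarrow> real) \<Rightarrow> (real \<times> real \<Rightarrow> real) \<Rightarrow>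
    (real \<times> real \<Rightarrow> real) \<Rightarrow> (real \<times> real \<Rightarrow> real)" where
  "adj_arg E w f g = (\<lambda>(s, \<theta>). if (s, \<theta>) \<in> OmegaS then
      (1/2) * deriv E ((1/2) * Radon f (s, \<theta>)) * (LINT r:{-1..1}|lborel. w (s - r) * g (r, \<theta>))
    else 0)"

end

theory Submission
  imports Defs
begin


lemma meas_cont:
  fixes F :: "'b::euclidean_space \<Rightarrow> 'c::{second_countable_topology,topological_space}" and \<phi> :: "'a::euclidean_space \<Rightarrow> 'b"
  assumes "F \<in> borel_measurable borel" "continuous_on UNIV \<phi>"
  shows "(\<lambda>x. F (\<phi> x)) \<in> borel_measurable lborel"
  using measurable_compose[OF borel_measurable_continuous_onI[OF assms(2)] assms(1)] by simp

lemma nn_shear_x: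
  fixes F :: "real \<times> real \<Rightarrow> ennreal"
  assumes [measurable]: "F \<in> borel_measurable borel"
  shows "(\<integral>\<^sup>+p. F (fst p + a * snd p, snd p) \<partial>lborel) = (\<integral>\<^sup>+p. F p \<partial>lborel)"
proof -
  have m: "(\<lambda>p. F (fst p + a * snd p, snd p)) \<in> borel_measurable (lborel \<Otimes>\<^sub>M lborel)"
    unfolding lborel_prod by (rule meas_cont[OF assms]) (intro continuous_intros)
  have m2: "F \<in> borel_measurable (lborel \<Otimes>\<^sub>M lborel)"
    unfolding lborel_prod by measurable
  have "(\<integral>\<^sup>+p. F (fst p + a * snd p, snd p) \<partial>lborel)
      = (\<integral>\<^sup>+y. \<integral>\<^sup>+x. F (x + a * y, y) \<partial>lborel \<partial>lborel)"
    using lborel_pair.nn_integral_snd[OF m] by (simp add: lborel_prod)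
  also have "\<dots> = (\<integral>\<^sup>+y. \<integral>\<^sup>+x. F (x, y) \<partial>lborel \<partial>lborel)"
  proof (rule nn_integral_cong)
    fix y :: real
    have "(\<integral>\<^sup>+x. F (x, y) \<partial>lborel) = (\<integral>\<^sup>+x. F (a*y + 1 * x, y) \<partial>lborel)"
      using nn_integral_real_affine[of "\<lambda>x. F (x, y)" 1 "a*y"] by simp
    then show "(\<integral>\<^sup>+x. F (x + a * y, y) \<partial>lborel) = (\<integral>\<^sup>+x. F (x, y) \<partial>lborel)"
      by (simp add: add.commute)
  qed
  also have "\<dots> = (\<integral>\<^sup>+p. F p \<partial>lborel)"
    using lborel_pair.nn_integral_snd[OF m2] by (simp add: lborel_prod)
  finally show ?thesis .
qed

lemma nn_shear_y:
  fixes F :: "real \<times> real \<Rightarrow> ennreal"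
  assumes [measurable]: "F \<in> borel_measurable borel"
  shows "(\<integral>\<^sup>+p. F (fst p, snd p + b * fst p) \<partial>lborel) = (\<integral>\<^sup>+p. F p \<partial>lborel)"
proof -
  have m: "(\<lambda>p. F (fst p, snd p + b * fst p)) \<in> borel_measurable (lborel \<Otimes>\<^sub>M lborel)"
    unfolding lborel_prod by (rule meas_cont[OF assms]) (intro continuous_intros)
  have m2: "F \<in> borel_measurable (lborel \<Otimes>\<^sub>M lborel)"
    unfolding lborel_prod by measurable
  have "(\<integral>\<^sup>+p. F (fst p, snd p + b * fst p) \<partial>lborel)
      = (\<integral>\<^sup>+x. \<integral>\<^sup>+y. F (x, y + b * x) \<partial>lborel \<partial>lborel)"
    using lborel.nn_integral_fst[OF m] by (simp add: lborel_prod)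
  also have "\<dots> = (\<integral>\<^sup>+x. \<integral>\<^sup>+y. F (x, y) \<partial>lborel \<partial>lborel)"
  proof (rule nn_integral_cong)
    fix x :: real
    have "(\<integral>\<^sup>+y. F (x, y) \<partial>lborel) = (\<integral>\<^sup>+y. F (x, b*x + 1 * y) \<partial>lborel)"
      using nn_integral_real_affine[of "\<lambda>y. F (x, y)" 1 "b*x"] by simp
    then show "(\<integral>\<^sup>+y. F (x, y + b * x) \<partial>lborel) = (\<integral>\<^sup>+y. F (x, y) \<partial>lborel)"
      by (simp add: add.commute)
  qed
  also have "\<dots> = (\<integral>\<^sup>+p. F p \<partial>lborel)"
    using lborel.nn_integral_fst[OF m2] by (simp add: lborel_prod)
  finally show ?thesis .
qed

lemma nn_neg2:
  fixes F :: "real \<times> real \<Rightarrow> ennreal"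
  assumes [measurable]: "F \<in> borel_measurable borel"
  shows "(\<integral>\<^sup>+p. F (- fst p, - snd p) \<partial>lborel) = (\<integral>\<^sup>+p. F p \<partial>lborel)"
proof -
  have m: "(\<lambda>p. F (- fst p, - snd p)) \<in> borel_measurable (lborel \<Otimes>\<^sub>M lborel)"
    unfolding lborel_prod by (rule meas_cont[OF assms]) (intro continuous_intros)
  have m2: "F \<in> borel_measurable (lborel \<Otimes>\<^sub>M lborel)"
    unfolding lborel_prod by measurable
  have "(\<integral>\<^sup>+p. F (- fst p, - snd p) \<partial>lborel)
      = (\<integral>\<^sup>+x. \<integral>\<^sup>+y. F (-x, -y) \<partial>lborel \<partial>lborel)"
    using lborel.nn_integral_fst[OF m] by (simp add: lborel_prod)
  also have "\<dots> = (\<integral>\<^sup>+x. \<integral>\<^sup>+y. F (-x, y) \<partial>lborel \<partial>lborel)"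
  proof (rule nn_integral_cong)
    fix x :: real
    have "(\<integral>\<^sup>+y. F (-x, y) \<partial>lborel) = (\<integral>\<^sup>+y. F (-x, 0 + (-1) * y) \<partial>lborel)"
      using nn_integral_real_affine[of "\<lambda>y. F (-x, y)" "-1" 0] by simp
    then show "(\<integral>\<^sup>+y. F (-x, -y) \<partial>lborel) = (\<integral>\<^sup>+y. F (-x, y) \<partial>lborel)"
      by simp
  qed
  also have "\<dots> = (\<integral>\<^sup>+y. \<integral>\<^sup>+x. F (-x, y) \<partial>lborel \<partial>lborel)"
  proof (rule lborel_pair.Fubini'[symmetric])
    have "(\<lambda>p. F (- fst p, snd p)) \<in> borel_measurable lborel"
      by (rule meas_cont[OF assms]) (intro continuous_intros)
    then show "(\<lambda>(x, y). F (- x, y)) \<in> borel_measurable (lborel \<Otimes>\<^sub>M lborel)"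
      by (simp add: lborel_prod case_prod_beta')
  qed
  also have "\<dots> = (\<integral>\<^sup>+y. \<integral>\<^sup>+x. F (x, y) \<partial>lborel \<partial>lborel)"
  proof (rule nn_integral_cong)
    fix y :: real
    have "(\<integral>\<^sup>+x. F (x, y) \<partial>lborel) = (\<integral>\<^sup>+x. F (0 + (-1) * x, y) \<partial>lborel)"
      using nn_integral_real_affine[of "\<lambda>x. F (x, y)" "-1" 0] by simp
    then show "(\<integral>\<^sup>+x. F (-x, y) \<partial>lborel) = (\<integral>\<^sup>+x. F (x, y) \<partial>lborel)"
      by simp
  qed
  also have "\<dots> = (\<integral>\<^sup>+p. F p \<partial>lborel)"
    using lborel_pair.nn_integral_snd[OF m2] by (simp add: lborel_prod)
  finally show ?thesis .
qed

definition rot :: "real \<Rightarrow> real \<times> real \<Rightarrow> real \<times> real" where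
  "rot t p = (fst p * cos t - snd p * sin t, fst p * sin t + snd p * cos t)"

lemma rot_shear:
  assumes c: "cos (t/2) \<noteq> 0"
  shows "rot t p = (let a = - (sin (t/2) / cos (t/2)); b = sin t;
      q1 = (fst p + a * snd p, snd p); q2 = (fst q1, snd q1 + b * fst q1)
      in (fst q2 + a * snd q2, snd q2))"
proof -
  have st: "sin t = 2 * sin (t/2) * cos (t/2)" using sin_double[of "t/2"] by simp
  have ct: "cos t = 1 - 2 * (sin (t/2))^2" using cos_double_sin[of "t/2"] by simp
  have sc: "(sin (t/2))^2 + (cos (t/2))^2 = 1" by simp
  define cn where "cn = cos (t/2)"
  define sn where "sn = sin (t/2)"
  have e: "cn * cn * sn * (cn * cn + sn * sn) = cn * cn * sn" using sc by (simp add: power2_eq_square cn_def sn_def)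
  have e2: "cn * cn + sn * sn = 1" using sc by (simp add: power2_eq_square cn_def sn_def)
  have c': "cn \<noteq> 0" using c cn_def by simp
  show ?thesis using c' e e2 unfolding rot_def Let_def st ct cn_def[symmetric] sn_def[symmetric]
    apply (simp add: field_simps power2_eq_square)
    by algebra
qed

lemma nn_rot:
  fixes F :: "real \<times> real \<Rightarrow> ennreal"
  assumes mF[measurable]: "F \<in> borel_measurable borel"
  shows "(\<integral>\<^sup>+p. F (rot t p) \<partial>lborel) = (\<integral>\<^sup>+p. F p \<partial>lborel)"
proof (cases "cos (t/2) = 0")
  case True
  have "sin t = 0" using sin_double[of "t/2"] True by simp
  moreover have "cos t = -1" using cos_double_cos[of "t/2"] True by simp
  ultimately have "\<And>p. rot t p = (- fst p, - snd p)" by (simp add: rot_def)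
  then show ?thesis using nn_neg2[OF mF] by simp
next
  case False
  define a where "a = - (sin (t/2) / cos (t/2))"
  define b where "b = sin t"
  define G1 where "G1 = (\<lambda>q. F (fst q + a * snd q, snd q))"
  define G2 where "G2 = (\<lambda>q. G1 (fst q, snd q + b * fst q))"
  have m1: "G1 \<in> borel_measurable borel"
    using meas_cont[OF mF, of "\<lambda>q. (fst q + a * snd q, snd q)"] unfolding G1_def
    by (simp add: continuous_intros)
  have m2: "G2 \<in> borel_measurable borel"
    using meas_cont[OF m1, of "\<lambda>q. (fst q, snd q + b * fst q)"] unfolding G2_def
    by (simp add: continuous_intros)
  have "\<And>p. F (rot t p) = G2 (fst p + a * snd p, snd p)"
    using rot_shear[OF False] by (simp add: G2_def G1_def a_def b_def Let_def)
  then have "(\<integral>\<^sup>+p. F (rot t p) \<partial>lborel) = (\<integral>\<^sup>+p. G2 (fst p + a * snd p, snd p) \<partial>lborel)" by simp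
  also have "\<dots> = (\<integral>\<^sup>+p. G2 p \<partial>lborel)" by (rule nn_shear_x[OF m2])
  also have "\<dots> = (\<integral>\<^sup>+p. G1 p \<partial>lborel)" unfolding G2_def by (rule nn_shear_y[OF m1])
  also have "\<dots> = (\<integral>\<^sup>+p. F p \<partial>lborel)" unfolding G1_def by (rule nn_shear_x[OF mF])
  finally show ?thesis .
qed

lemma CS_bochner:
  fixes f g :: "'a \<Rightarrow> real"
  assumes [measurable]: "f \<in> borel_measurable M" "g \<in> borel_measurable M"
  shows "ennreal ((\<integral>x. f x * g x \<partial>M)\<^sup>2) \<le> (\<integral>\<^sup>+x. ennreal ((f x)\<^sup>2) \<partial>M) * (\<integral>\<^sup>+x. ennreal ((g x)\<^sup>2) \<partial>M)"
proof (cases "integrable M (\<lambda>x. f x * g x)")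
  case True
  have "ennreal \<bar>\<integral>x. f x * g x \<partial>M\<bar> \<le> (\<integral>\<^sup>+x. ennreal (norm (f x * g x)) \<partial>M)"
    using integral_norm_bound_ennreal[OF True] by simp
  also have "\<dots> = (\<integral>\<^sup>+x. ennreal \<bar>f x\<bar> * ennreal \<bar>g x\<bar> \<partial>M)"
    by (simp add: abs_mult ennreal_mult)
  finally have 1: "ennreal \<bar>\<integral>x. f x * g x \<partial>M\<bar> \<le> (\<integral>\<^sup>+x. ennreal \<bar>f x\<bar> * ennreal \<bar>g x\<bar> \<partial>M)" .
  have "ennreal ((\<integral>x. f x * g x \<partial>M)\<^sup>2) = (ennreal \<bar>\<integral>x. f x * g x \<partial>M\<bar>)\<^sup>2"
    by (subst ennreal_power) auto
  also have "\<dots> \<le> (\<integral>\<^sup>+x. ennreal \<bar>f x\<bar> * ennreal \<bar>g x\<bar> \<partial>M)\<^sup>2"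
    using 1 by (rule power_mono) simp
  also have "\<dots> \<le> (\<integral>\<^sup>+x. (ennreal \<bar>f x\<bar>)\<^sup>2 \<partial>M) * (\<integral>\<^sup>+x. (ennreal \<bar>g x\<bar>)\<^sup>2 \<partial>M)"
    by (rule Cauchy_Schwarz_nn_integral) auto
  also have "\<dots> = (\<integral>\<^sup>+x. ennreal ((f x)\<^sup>2) \<partial>M) * (\<integral>\<^sup>+x. ennreal ((g x)\<^sup>2) \<partial>M)"
    by (simp add: ennreal_power)
  finally show ?thesis .
next
  case False
  then show ?thesis by (simp add: not_integrable_integral_eq)
qed

lemma sq_int_bound:
  fixes G :: "real \<Rightarrow> real"
  assumes [measurable]: "G \<in> borel_measurable lborel" and z: "\<And>\<sigma>. \<bar>\<sigma>\<bar> > 1 \<Longrightarrow> G \<sigma> = 0"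
  shows "ennreal ((\<integral>\<sigma>. G \<sigma> \<partial>lborel)\<^sup>2) \<le> 2 * (\<integral>\<^sup>+\<sigma>. ennreal ((G \<sigma>)\<^sup>2) \<partial>lborel)"
proof -
  have "(\<integral>\<sigma>. G \<sigma> \<partial>lborel) = (\<integral>\<sigma>. G \<sigma> * indicator {-1..1} \<sigma> \<partial>lborel)"
  proof (rule Bochner_Integration.integral_cong[OF refl])
    fix \<sigma> :: real
    show "G \<sigma> = G \<sigma> * indicator {-1..1} \<sigma>"
      using z[of \<sigma>] by (cases "\<sigma> \<in> {-1..1}") auto
  qed
  have "ennreal ((\<integral>\<sigma>. G \<sigma> \<partial>lborel)\<^sup>2) \<le> (\<integral>\<^sup>+x. ennreal ((G x)\<^sup>2) \<partial>lborel) * (\<integral>\<^sup>+x. ennreal ((indicator {-1..1::real} x :: real)\<^sup>2) \<partial>lborel)"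
    by (simp only: \<open>integral\<^sup>L lborel G = _\<close>) (rule CS_bochner, simp, measurable)
  also have "(\<integral>\<^sup>+x. ennreal ((indicator {-1..1::real} x :: real)\<^sup>2) \<partial>lborel) = 2"
  proof -
    have "(\<integral>\<^sup>+x. ennreal ((indicator {-1..1::real} x :: real)\<^sup>2) \<partial>lborel) = (\<integral>\<^sup>+x. indicator {-1..1::real} x \<partial>lborel)"
      by (rule nn_integral_cong) (auto simp: indicator_def)
    also have "\<dots> = 2" by simp
    finally show ?thesis .
  qed
  finally show ?thesis by (simp add: mult.commute)
qed



lemma rot_norm: "(fst (rot t p))\<^sup>2 + (snd (rot t p))\<^sup>2 = (fst p)\<^sup>2 + (snd p)\<^sup>2"
proof -
  have e: "sin t * sin t + cos t * cos t = 1"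
    using sin_cos_squared_add[of t] by (simp add: power2_eq_square)
  show ?thesis unfolding rot_def power2_eq_square fst_conv snd_conv using e by algebra
qed

lemma Radon_alt: "Radon h = (\<lambda>p. if p \<in> OmegaS then \<integral>\<sigma>. h (rot (snd p) (fst p, \<sigma>)) \<partial>lborel else 0)"
  unfolding Radon_def rot_def by (auto simp: fun_eq_iff)

lemma OmegaS_eq: "OmegaS = {p. -1 \<le> fst p \<and> fst p \<le> 1 \<and> 0 \<le> snd p \<and> snd p < 2*pi}"
  unfolding OmegaS_def by auto

lemma OmegaS_sets'[measurable]: "OmegaS \<in> sets borel"
  unfolding OmegaS_def by (rule borel_Times) auto

lemma OmegaS_sets[measurable]: "OmegaS \<in> sets lborel"
  using OmegaS_sets' by simp

lemma OmegaD_sets'[measurable]: "OmegaD \<in> sets borel"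
  unfolding OmegaD_def by (intro borel_closed closed_Collect_le continuous_intros)

lemma OmegaD_sets[measurable]: "OmegaD \<in> sets lborel"
  using OmegaD_sets' by simp

lemma meas_pair_lborel:
  "(f \<in> borel_measurable (lborel \<Otimes>\<^sub>M lborel)) = (f \<in> borel_measurable borel)"
  by (simp add: lborel_prod)

lemma Radon_meas:
  assumes [measurable]: "h \<in> borel_measurable lborel"
  shows "Radon h \<in> borel_measurable lborel"
proof -
  have "(\<lambda>q. h (rot (snd (fst q)) (fst (fst q), snd q))) \<in> borel_measurable lborel"
    by (rule meas_cont) (auto simp: rot_def intro!: continuous_intros)
  then have m: "(\<lambda>(p, \<sigma>). h (rot (snd p) (fst p, \<sigma>))) \<in> borel_measurable (lborel \<Otimes>\<^sub>M lborel)"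
    by (simp add: lborel_prod case_prod_beta')
  have "(\<lambda>p. \<integral>\<sigma>. h (rot (snd p) (fst p, \<sigma>)) \<partial>lborel) \<in> borel_measurable lborel"
    by (rule lborel.borel_measurable_lebesgue_integral[OF m])
  then show ?thesis unfolding Radon_alt by measurable
qed

lemma L2D_zero: "L2D h \<Longrightarrow> (fst p)\<^sup>2 + (snd p)\<^sup>2 > 1 \<Longrightarrow> h p = 0"
  unfolding L2D_def OmegaD_def by (cases p) auto

lemma nn_finite_sq:
  fixes h :: "'a::euclidean_space \<Rightarrow> real"
  assumes "integrable lborel (\<lambda>x. (h x)\<^sup>2)"
  shows "(\<integral>\<^sup>+x. ennreal ((h x)\<^sup>2) \<partial>lborel) < \<infinity>"
  using assms unfolding integrable_iff_bounded by simp

lemma Radon_L2: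
  assumes hL: "L2D h"
  shows "integrable lborel (\<lambda>p. (Radon h p)\<^sup>2)"
proof -
  have hm[measurable]: "h \<in> borel_measurable lborel" using hL unfolding L2D_def by auto
  have hm'[measurable]: "h \<in> borel_measurable borel" using hm by simp
  define I where "I = (\<integral>\<^sup>+x. ennreal ((h x)\<^sup>2) \<partial>lborel)"
  have Ifin: "I < \<infinity>" unfolding I_def by (rule nn_finite_sq) (use hL in \<open>auto simp: L2D_def\<close>)
  define H where "H = (\<lambda>\<theta> s \<sigma>. ennreal ((h (rot \<theta> (s, \<sigma>)))\<^sup>2))"
  have Hm1: "(\<lambda>q. H (snd (fst q)) (fst (fst q)) (snd q)) \<in> borel_measurable lborel"
    unfolding H_def
    by (rule meas_cont[of "\<lambda>x. ennreal ((h x)\<^sup>2)"]) (auto simp: rot_def intro!: continuous_intros)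
  then have Hm2: "(\<lambda>(p, \<sigma>). H (snd p) (fst p) \<sigma>) \<in> borel_measurable (lborel \<Otimes>\<^sub>M lborel)"
    by (simp add: lborel_prod case_prod_beta')
  have Hm3: "(\<lambda>p. \<integral>\<^sup>+\<sigma>. H (snd p) (fst p) \<sigma> \<partial>lborel) \<in> borel_measurable lborel"
    by (rule lborel.borel_measurable_nn_integral[OF Hm2])
  define B where "B = (\<lambda>p. indicator {0..2*pi} (snd p) * (2 * \<integral>\<^sup>+\<sigma>. H (snd p) (fst p) \<sigma> \<partial>lborel))"
  define F1 where "F1 = (\<lambda>p::real\<times>real. indicator {0..2*pi} (snd p) :: ennreal)"
  define F2 where "F2 = (\<lambda>p. \<integral>\<^sup>+\<sigma>. H (snd p) (fst p) \<sigma> \<partial>lborel)"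
  have F1m[measurable]: "F1 \<in> borel_measurable lborel" unfolding F1_def
    by (rule meas_cont[of "indicator {0..2*pi}"]) (auto intro!: continuous_intros)
  have F2m[measurable]: "F2 \<in> borel_measurable lborel" unfolding F2_def by (rule Hm3)
  have "(\<lambda>p. F1 p * (2 * F2 p)) \<in> borel_measurable lborel" by measurable
  then have Bm: "B \<in> borel_measurable lborel" unfolding B_def F1_def F2_def .
  have pw: "ennreal ((Radon h p)\<^sup>2) \<le> B p" for p
  proof (cases "p \<in> OmegaS")
    case True
    obtain s \<theta> where p: "p = (s, \<theta>)" by fastforce
    have th: "\<theta> \<in> {0..2*pi}" using True p unfolding OmegaS_def by auto
    have "ennreal ((\<integral>\<sigma>. h (rot \<theta> (s, \<sigma>)) \<partial>lborel)\<^sup>2) \<le> 2 * (\<integral>\<^sup>+\<sigma>. ennreal ((h (rot \<theta> (s, \<sigma>)))\<^sup>2) \<partial>lborel)"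
    proof (rule sq_int_bound)
      show "(\<lambda>\<sigma>. h (rot \<theta> (s, \<sigma>))) \<in> borel_measurable lborel"
        by (rule meas_cont[OF hm']) (auto simp: rot_def intro!: continuous_intros)
      fix \<sigma> :: real assume "1 < \<bar>\<sigma>\<bar>"
      then have "1 < \<sigma>\<^sup>2" by (metis abs_ge_zero abs_power2 less_le_trans one_less_power pos2 power2_abs abs_square_less_1 not_less)
      moreover have "0 \<le> s\<^sup>2" by simp
      ultimately have "1 < s\<^sup>2 + \<sigma>\<^sup>2" by linarith
      then show "h (rot \<theta> (s, \<sigma>)) = 0"
        using rot_norm[of \<theta> "(s, \<sigma>)"] by (intro L2D_zero[OF hL]) auto
    qed
    then show ?thesis using True th unfolding Radon_alt B_def H_def p by simp
  next
    case False
    then show ?thesis unfolding Radon_alt by simp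
  qed
  have Bm2: "B \<in> borel_measurable (lborel \<Otimes>\<^sub>M lborel)" using Bm by (simp add: lborel_prod)
  have "(\<integral>\<^sup>+p. ennreal ((Radon h p)\<^sup>2) \<partial>lborel) \<le> (\<integral>\<^sup>+p. B p \<partial>lborel)"
    by (rule nn_integral_mono) (rule pw)
  also have "\<dots> = (\<integral>\<^sup>+\<theta>. \<integral>\<^sup>+s. B (s, \<theta>) \<partial>lborel \<partial>lborel)"
    using lborel_pair.nn_integral_snd[OF Bm2] by (simp add: lborel_prod)
  also have "\<dots> = (\<integral>\<^sup>+\<theta>. indicator {0..2*pi} \<theta> * (2 * I) \<partial>lborel)"
  proof (rule nn_integral_cong)
    fix \<theta> :: real
    have m: "(\<lambda>q. ennreal ((h (rot \<theta> q))\<^sup>2)) \<in> borel_measurable (lborel \<Otimes>\<^sub>M lborel)"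
      unfolding lborel_prod
      by (rule meas_cont[of "\<lambda>x. ennreal ((h x)\<^sup>2)"]) (auto simp: rot_def intro!: continuous_intros)
    have "(\<lambda>(s, \<sigma>). H \<theta> s \<sigma>) \<in> borel_measurable (lborel \<Otimes>\<^sub>M lborel)"
      using m by (simp add: H_def case_prod_beta')
    then have m\<theta>: "(\<lambda>s. \<integral>\<^sup>+\<sigma>. H \<theta> s \<sigma> \<partial>lborel) \<in> borel_measurable lborel"
      by (rule lborel.borel_measurable_nn_integral)
    have "(\<integral>\<^sup>+s. B (s, \<theta>) \<partial>lborel) = (\<integral>\<^sup>+s. (indicator {0..2*pi} \<theta> * 2) * (\<integral>\<^sup>+\<sigma>. H \<theta> s \<sigma> \<partial>lborel) \<partial>lborel)"
      unfolding B_def by (simp add: mult.assoc)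
    also have "\<dots> = (indicator {0..2*pi} \<theta> * 2) * (\<integral>\<^sup>+s. \<integral>\<^sup>+\<sigma>. H \<theta> s \<sigma> \<partial>lborel \<partial>lborel)"
      by (rule nn_integral_cmult[OF m\<theta>])
    finally have "(\<integral>\<^sup>+s. B (s, \<theta>) \<partial>lborel) = indicator {0..2*pi} \<theta> * (2 * \<integral>\<^sup>+s. \<integral>\<^sup>+\<sigma>. H \<theta> s \<sigma> \<partial>lborel \<partial>lborel)"
      by (simp add: mult.assoc)
    also have "(\<integral>\<^sup>+s. \<integral>\<^sup>+\<sigma>. H \<theta> s \<sigma> \<partial>lborel \<partial>lborel) = (\<integral>\<^sup>+q. ennreal ((h (rot \<theta> q))\<^sup>2) \<partial>lborel)"
      using lborel.nn_integral_fst[OF m] unfolding H_def by (simp add: lborel_prod)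
    also have "\<dots> = I"
      unfolding I_def by (rule nn_rot[of "\<lambda>x. ennreal ((h x)\<^sup>2)"]) measurable
    finally show "(\<integral>\<^sup>+s. B (s, \<theta>) \<partial>lborel) = indicator {0..2*pi} \<theta> * (2 * I)" .
  qed
  also have "\<dots> = 2 * pi * (2 * I)"
    by (simp add: nn_integral_multc)
  also have "\<dots> < \<infinity>" using Ifin by (simp add: ennreal_mult_less_top)
  finally have fin: "(\<integral>\<^sup>+p. ennreal ((Radon h p)\<^sup>2) \<partial>lborel) < \<infinity>" .
  show ?thesis
    unfolding integrable_iff_bounded using fin Radon_meas[OF hm] by simp
qed



lemma nn_reflect_shift:
  fixes F :: "real \<Rightarrow> ennreal"
  assumes [measurable]: "F \<in> borel_measurable borel"
  shows "(\<integral>\<^sup>+r. F (s - r) \<partial>lborel) = (\<integral>\<^sup>+r. F r \<partial>lborel)"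
  using nn_integral_real_affine[of F "-1" s] by simp

lemma adj_L2S:
  fixes E w :: "real \<Rightarrow> real" and f g :: "real \<times> real \<Rightarrow> real"
  assumes E'm[measurable]: "deriv E \<in> borel_measurable borel"
    and E'b: "\<And>x. \<bar>deriv E x\<bar> \<le> K"
    and wm[measurable]: "w \<in> borel_measurable borel"
    and w2: "integrable lborel (\<lambda>x. (w x)\<^sup>2)"
    and fL: "L2D f" and gL: "L2S g"
  shows "L2S (adj_arg E w f g)"
proof -
  have fm[measurable]: "f \<in> borel_measurable lborel" using fL unfolding L2D_def by auto
  have gm[measurable]: "g \<in> borel_measurable lborel" using gL unfolding L2S_def by auto
  have gm'[measurable]: "g \<in> borel_measurable borel" using gm by simp
  have Rfm[measurable]: "Radon f \<in> borel_measurable lborel" by (rule Radon_meas[OF fm])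
  define C where "C = (\<lambda>p::real\<times>real. \<integral>r. indicator {-1..1} r * w (fst p - r) * g (r, snd p) \<partial>lborel)"
  have adj_eq: "adj_arg E w f g = (\<lambda>p. if p \<in> OmegaS then (1/2) * deriv E ((1/2) * Radon f p) * C p else 0)"
    unfolding adj_arg_def C_def set_lebesgue_integral_def
    by (auto simp: fun_eq_iff mult.assoc)
  have Cm0: "(\<lambda>q::(real\<times>real)\<times>real. indicator {-1..1} (snd q) * w (fst (fst q) - snd q) * g (snd q, snd (fst q))) \<in> borel_measurable lborel"
  proof -
    define a1 where "a1 = (\<lambda>q::(real\<times>real)\<times>real. indicator {-1..1} (snd q) :: real)"
    define a2 where "a2 = (\<lambda>q::(real\<times>real)\<times>real. w (fst (fst q) - snd q))"
    define a3 where "a3 = (\<lambda>q::(real\<times>real)\<times>real. g (snd q, snd (fst q)))"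
    have [measurable]: "a1 \<in> borel_measurable lborel" unfolding a1_def
      by (rule meas_cont[of "indicator {-1..1}"]) (auto intro!: continuous_intros)
    have [measurable]: "a2 \<in> borel_measurable lborel" unfolding a2_def
      by (rule meas_cont[OF wm]) (auto intro!: continuous_intros)
    have [measurable]: "a3 \<in> borel_measurable lborel" unfolding a3_def
      by (rule meas_cont[OF gm']) (auto intro!: continuous_intros)
    have "(\<lambda>q. a1 q * a2 q * a3 q) \<in> borel_measurable lborel" by measurable
    then show ?thesis unfolding a1_def a2_def a3_def .
  qed
  then have "(\<lambda>(p, r). indicator {-1..1} r * w (fst p - r) * g (r, snd p)) \<in> borel_measurable (lborel \<Otimes>\<^sub>M lborel)"
    by (simp add: lborel_prod case_prod_beta')
  then have Cm[measurable]: "C \<in> borel_measurable lborel"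
    unfolding C_def by (rule lborel.borel_measurable_lebesgue_integral)
  have dm[measurable]: "(\<lambda>p. deriv E ((1/2) * Radon f p)) \<in> borel_measurable lborel"
    by measurable
  have adjm: "adj_arg E w f g \<in> borel_measurable lborel"
    unfolding adj_eq by measurable
  define W where "W = (\<integral>\<^sup>+x. ennreal ((w x)\<^sup>2) \<partial>lborel)"
  have Wfin: "W < \<infinity>" unfolding W_def by (rule nn_finite_sq[OF w2])
  define G where "G = (\<lambda>\<theta>. \<integral>\<^sup>+r. ennreal ((g (r, \<theta>))\<^sup>2) \<partial>lborel)"
  define c where "c = ennreal (K\<^sup>2 / 4) * W"
  define D where "D = (\<lambda>p::real\<times>real. indicator {-1..1} (fst p) * (c * G (snd p)))"
  have pw: "ennreal ((adj_arg E w f g p)\<^sup>2) \<le> D p" for p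
  proof (cases "p \<in> OmegaS")
    case True
    obtain s \<theta> where p: "p = (s, \<theta>)" by fastforce
    have s: "s \<in> {-1..1}" using True p unfolding OmegaS_def by auto
    have "ennreal ((C p)\<^sup>2) \<le> (\<integral>\<^sup>+r. ennreal ((indicator {-1..1} r * w (s - r))\<^sup>2) \<partial>lborel) * G \<theta>"
      unfolding C_def p G_def fst_conv snd_conv
      by (rule CS_bochner[of "\<lambda>r. indicator {-1..1} r * w (s - r)" lborel "\<lambda>r. g (r, \<theta>)"]) measurable
    also have "(\<integral>\<^sup>+r. ennreal ((indicator {-1..1} r * w (s - r))\<^sup>2) \<partial>lborel) \<le> (\<integral>\<^sup>+r. ennreal ((w (s - r))\<^sup>2) \<partial>lborel)"
      by (rule nn_integral_mono) (auto simp: indicator_def)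
    also have "\<dots> = W" unfolding W_def
      by (rule nn_reflect_shift[of "\<lambda>x. ennreal ((w x)\<^sup>2)"]) measurable
    finally have Cb: "ennreal ((C p)\<^sup>2) \<le> W * G \<theta>" by (simp add: mult_right_mono)
    have "(adj_arg E w f g p)\<^sup>2 = (deriv E ((1/2) * Radon f p))\<^sup>2 / 4 * (C p)\<^sup>2"
      unfolding adj_eq using True by (simp add: power_mult_distrib power_divide)
    also have "\<dots> \<le> K\<^sup>2 / 4 * (C p)\<^sup>2"
    proof -
      have "(deriv E ((1/2) * Radon f p))\<^sup>2 \<le> K\<^sup>2"
      proof -
        have "\<bar>deriv E ((1/2) * Radon f p)\<bar>\<^sup>2 \<le> K\<^sup>2"
          by (rule power_mono[OF E'b]) simp
        then show ?thesis by simp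
      qed
      then show ?thesis by (intro mult_right_mono divide_right_mono) auto
    qed
    finally have "ennreal ((adj_arg E w f g p)\<^sup>2) \<le> ennreal (K\<^sup>2 / 4) * ennreal ((C p)\<^sup>2)"
      by (simp add: ennreal_mult[symmetric] ennreal_leI)
    also have "\<dots> \<le> ennreal (K\<^sup>2 / 4) * (W * G \<theta>)"
      using Cb by (rule mult_left_mono) simp
    also have "\<dots> = D p" unfolding D_def c_def p using s by (simp add: mult.assoc)
    finally show ?thesis .
  next
    case False
    then show ?thesis unfolding adj_eq by simp
  qed
  have gsq: "(\<lambda>q. ennreal ((g q)\<^sup>2)) \<in> borel_measurable (lborel \<Otimes>\<^sub>M lborel)"
    unfolding lborel_prod by measurable
  have Gm: "G \<in> borel_measurable lborel"
  proof -
    have "(\<lambda>q. ennreal ((g (snd q, fst q))\<^sup>2)) \<in> borel_measurable (lborel :: (real\<times>real) measure)"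
      by (rule meas_cont[of "\<lambda>q. ennreal ((g q)\<^sup>2)" "\<lambda>q. (snd q, fst q)"]) (auto intro!: continuous_intros)
    then have "(\<lambda>(\<theta>, r). ennreal ((g (r, \<theta>))\<^sup>2)) \<in> borel_measurable (lborel \<Otimes>\<^sub>M lborel)"
      by (simp add: lborel_prod case_prod_beta')
    then show ?thesis unfolding G_def by (rule lborel.borel_measurable_nn_integral)
  qed
  have Gint: "(\<integral>\<^sup>+\<theta>. G \<theta> \<partial>lborel) = (\<integral>\<^sup>+q. ennreal ((g q)\<^sup>2) \<partial>lborel)"
    unfolding G_def using lborel_pair.nn_integral_snd[OF gsq] by (simp add: lborel_prod)
  have Gfin: "(\<integral>\<^sup>+\<theta>. G \<theta> \<partial>lborel) < \<infinity>"
    unfolding Gint by (rule nn_finite_sq) (use gL in \<open>auto simp: L2S_def\<close>)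
  have Dm2: "D \<in> borel_measurable (lborel \<Otimes>\<^sub>M lborel)"
  proof -
    define a1 where "a1 = (\<lambda>p::real\<times>real. indicator {-1..1} (fst p) :: ennreal)"
    define a2 where "a2 = (\<lambda>p::real\<times>real. G (snd p))"
    have [measurable]: "a1 \<in> borel_measurable lborel" unfolding a1_def
      by (rule meas_cont[of "indicator {-1..1}"]) (auto intro!: continuous_intros)
    have [measurable]: "a2 \<in> borel_measurable lborel" unfolding a2_def
      by (rule meas_cont[of G]) (use Gm in \<open>auto intro!: continuous_intros\<close>)
    have "(\<lambda>q. a1 q * (c * a2 q)) \<in> borel_measurable lborel" by measurable
    then show ?thesis unfolding a1_def a2_def D_def lborel_prod .
  qed
  have "(\<integral>\<^sup>+p. ennreal ((adj_arg E w f g p)\<^sup>2) \<partial>lborel) \<le> (\<integral>\<^sup>+p. D p \<partial>lborel)"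
    by (rule nn_integral_mono) (rule pw)
  also have "\<dots> = (\<integral>\<^sup>+s. \<integral>\<^sup>+\<theta>. D (s, \<theta>) \<partial>lborel \<partial>lborel)"
    using lborel.nn_integral_fst[OF Dm2] by (simp add: lborel_prod)
  also have "\<dots> = (\<integral>\<^sup>+s. indicator {-1..1::real} s * (c * \<integral>\<^sup>+\<theta>. G \<theta> \<partial>lborel) \<partial>lborel)"
    unfolding D_def using Gm by (simp add: nn_integral_cmult)
  also have "\<dots> = 2 * (c * \<integral>\<^sup>+\<theta>. G \<theta> \<partial>lborel)"
    by (simp add: nn_integral_multc)
  also have "\<dots> < \<infinity>" using Gfin Wfin unfolding c_def by (simp add: ennreal_mult_less_top)
  finally have fin: "(\<integral>\<^sup>+p. ennreal ((adj_arg E w f g p)\<^sup>2) \<partial>lborel) < \<infinity>" .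
  have "integrable lborel (\<lambda>p. (adj_arg E w f g p)\<^sup>2)"
    unfolding integrable_iff_bounded using fin adjm by simp
  moreover have "\<forall>x. x \<notin> OmegaS \<longrightarrow> adj_arg E w f g x = 0" unfolding adj_eq by simp
  ultimately show ?thesis unfolding L2S_def using adjm by simp
qed



lemma meas_cont_b:
  fixes F :: "'b::euclidean_space \<Rightarrow> 'c::{second_countable_topology,topological_space}" and \<phi> :: "'a::euclidean_space \<Rightarrow> 'b"
  assumes "F \<in> borel_measurable borel" "continuous_on UNIV \<phi>"
  shows "(\<lambda>x. F (\<phi> x)) \<in> borel_measurable borel"
  using meas_cont[OF assms] by simp

lemma meas_cont_p:
  fixes F :: "'b::euclidean_space \<Rightarrow> 'c::{second_countable_topology,topological_space}"
    and \<phi> :: "'a1::euclidean_space \<times> 'a2::euclidean_space \<Rightarrow> 'b"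
  assumes "F \<in> borel_measurable borel" "continuous_on UNIV \<phi>"
  shows "(\<lambda>x. F (\<phi> x)) \<in> borel_measurable (lborel \<Otimes>\<^sub>M lborel)"
  using meas_cont[OF assms] by (simp add: lborel_prod)

lemma norm_int_le_nn:
  fixes f :: "'a \<Rightarrow> real"
  shows "ennreal (norm (\<integral>x. f x \<partial>M)) \<le> (\<integral>\<^sup>+x. ennreal (norm (f x)) \<partial>M)"
proof (cases "integrable M f")
  case True then show ?thesis by (rule integral_norm_bound_ennreal)
next
  case False then show ?thesis by (simp add: not_integrable_integral_eq)
qed

lemma abs_int_le_nn:
  fixes f :: "'a \<Rightarrow> real"
  shows "ennreal \<bar>integral\<^sup>L M f\<bar> \<le> (\<integral>\<^sup>+x. ennreal \<bar>f x\<bar> \<partial>M)"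
  using norm_int_le_nn[where f=f and M=M] by simp

lemma amgm_ennreal:
  fixes x y :: real
  shows "ennreal \<bar>(1/2) * x * y\<bar> \<le> ennreal (x\<^sup>2) + ennreal (y\<^sup>2)"
proof -
  have "\<bar>(1/2) * x * y\<bar> \<le> x\<^sup>2 + y\<^sup>2"
  proof -
    have "0 \<le> (\<bar>x\<bar> - \<bar>y\<bar>)\<^sup>2" by simp
    then have "2 * \<bar>x\<bar> * \<bar>y\<bar> \<le> x\<^sup>2 + y\<^sup>2" by (simp add: power2_eq_square algebra_simps)
    moreover have "\<bar>(1/2) * x * y\<bar> = (1/2) * \<bar>x\<bar> * \<bar>y\<bar>" by (simp add: abs_mult)
    moreover have "0 \<le> \<bar>x\<bar> * \<bar>y\<bar>" by simp
    ultimately show ?thesis by linarith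
  qed
  then have "ennreal \<bar>(1/2) * x * y\<bar> \<le> ennreal (x\<^sup>2 + y\<^sup>2)" by (rule ennreal_leI)
  then show ?thesis by (simp add: ennreal_plus)
qed



lemma main_eq:
  fixes E w :: "real \<Rightarrow> real" and f g h :: "real \<times> real \<Rightarrow> real"
  assumes E'm[measurable]: "deriv E \<in> borel_measurable borel"
    and E'b: "\<And>x. \<bar>deriv E x\<bar> \<le> K"
    and wm[measurable]: "w \<in> borel_measurable borel"
    and w2: "integrable lborel (\<lambda>x. (w x)\<^sup>2)"
    and fL: "L2D f" and hL: "L2D h" and gL: "L2S g"
  shows "innerS (Fderiv E w f h) g = innerS (Radon h) (adj_arg E w f g)"
proof -
  have fm[measurable]: "f \<in> borel_measurable lborel" using fL unfolding L2D_def by auto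
  have hm[measurable]: "h \<in> borel_measurable lborel" using hL unfolding L2D_def by auto
  have gm[measurable]: "g \<in> borel_measurable lborel" using gL unfolding L2S_def by auto
  have gm'[measurable]: "g \<in> borel_measurable borel" using gm by simp
  have Rfm[measurable]: "Radon f \<in> borel_measurable lborel" by (rule Radon_meas[OF fm])
  have Rhm[measurable]: "Radon h \<in> borel_measurable lborel" by (rule Radon_meas[OF hm])
  have g0: "\<And>p. p \<notin> OmegaS \<Longrightarrow> g p = 0" using gL unfolding L2S_def by auto
  have Rh0: "\<And>p. p \<notin> OmegaS \<Longrightarrow> Radon h p = 0" unfolding Radon_alt by simp
  define a where "a = (\<lambda>q. deriv E ((1/2) * Radon f q) * Radon h q)"
  have am: "a \<in> borel_measurable lborel" unfolding a_def by measurable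
  have am'[measurable]: "a \<in> borel_measurable borel" using am by simp
  have a0: "\<And>q. q \<notin> OmegaS \<Longrightarrow> a q = 0" unfolding a_def using Rh0 by simp
  define k where "k = (\<lambda>\<theta> s r. (1/2) * w (r - s) * a (r, \<theta>) * g (s, \<theta>))"
  define \<kappa> where "\<kappa> = (\<lambda>x::real\<times>real\<times>real. k (fst x) (fst (snd x)) (snd (snd x)))"
  have \<kappa>m[measurable]: "\<kappa> \<in> borel_measurable borel"
  proof -
    define b1 where "b1 = (\<lambda>x::real\<times>real\<times>real. w (snd (snd x) - fst (snd x)))"
    define b2 where "b2 = (\<lambda>x::real\<times>real\<times>real. a (snd (snd x), fst x))"
    define b3 where "b3 = (\<lambda>x::real\<times>real\<times>real. g (fst (snd x), fst x))"
    have [measurable]: "b1 \<in> borel_measurable borel" unfolding b1_def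
      by (rule meas_cont_b[OF wm]) (auto intro!: continuous_intros)
    have [measurable]: "b2 \<in> borel_measurable borel" unfolding b2_def
      by (rule meas_cont_b[OF am']) (auto intro!: continuous_intros)
    have [measurable]: "b3 \<in> borel_measurable borel" unfolding b3_def
      by (rule meas_cont_b[OF gm']) (auto intro!: continuous_intros)
    have "(\<lambda>x. (1/2) * b1 x * b2 x * b3 x) \<in> borel_measurable borel" by measurable
    then show ?thesis unfolding b1_def b2_def b3_def \<kappa>_def k_def .
  qed
  have N\<kappa>m: "(\<lambda>x. ennreal (norm (\<kappa> x))) \<in> borel_measurable borel" by measurable
  define \<Phi> where "\<Phi> = (\<lambda>(s, \<theta>). \<integral>r. k \<theta> s r \<partial>lborel)"
  define \<Psi> where "\<Psi> = (\<lambda>(r, \<theta>). \<integral>s. k \<theta> s r \<partial>lborel)"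
  have LHS: "innerS (Fderiv E w f h) g = (\<integral>p. \<Phi> p \<partial>lborel)"
  proof -
    have "\<And>p. indicator OmegaS p * (Fderiv E w f h p * g p) = \<Phi> p"
    proof -
      fix p :: "real \<times> real"
      obtain s \<theta> where p: "p = (s, \<theta>)" by fastforce
      show "indicator OmegaS p * (Fderiv E w f h p * g p) = \<Phi> p"
      proof (cases "p \<in> OmegaS")
        case True
        have "Fderiv E w f h p * g p = (1/2) * (\<integral>r. w (r - s) * deriv E ((1/2) * Radon f (r, \<theta>)) * Radon h (r, \<theta>) \<partial>lborel) * g (s, \<theta>)"
          unfolding Fderiv_def p using True p by simp
        also have "\<dots> = (\<integral>r. k \<theta> s r \<partial>lborel)"
          unfolding k_def a_def by (simp add: mult.assoc[symmetric])
        finally show ?thesis using True unfolding \<Phi>_def p by simp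
      next
        case False
        then show ?thesis using g0[OF False] unfolding \<Phi>_def k_def p by simp
      qed
    qed
    then show ?thesis unfolding innerS_def set_lebesgue_integral_def by simp
  qed
  have RHS: "innerS (Radon h) (adj_arg E w f g) = (\<integral>p. \<Psi> p \<partial>lborel)"
  proof -
    have "\<And>p. indicator OmegaS p * (Radon h p * adj_arg E w f g p) = \<Psi> p"
    proof -
      fix p :: "real \<times> real"
      obtain r \<theta> where p: "p = (r, \<theta>)" by fastforce
      show "indicator OmegaS p * (Radon h p * adj_arg E w f g p) = \<Psi> p"
      proof (cases "p \<in> OmegaS")
        case True
        have "(LINT s:{-1..1}|lborel. w (r - s) * g (s, \<theta>)) = (\<integral>s. w (r - s) * g (s, \<theta>) \<partial>lborel)"
          unfolding set_lebesgue_integral_def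
        proof (rule Bochner_Integration.integral_cong[OF refl])
          fix s :: real
          show "indicator {-1..1} s *\<^sub>R (w (r - s) * g (s, \<theta>)) = w (r - s) * g (s, \<theta>)"
            using g0[of "(s, \<theta>)"] unfolding OmegaS_def by (cases "s \<in> {-1..1}") auto
        qed
        then have "Radon h p * adj_arg E w f g p = Radon h (r, \<theta>) * ((1/2) * deriv E ((1/2) * Radon f (r, \<theta>)) * (\<integral>s. w (r - s) * g (s, \<theta>) \<partial>lborel))"
          unfolding adj_arg_def p using True p by simp
        also have "\<dots> = (\<integral>s. k \<theta> s r \<partial>lborel)"
        proof -
          have e: "\<And>s. k \<theta> s r = ((1/2) * a (r, \<theta>)) * (w (r - s) * g (s, \<theta>))"
            by (simp add: k_def mult_ac)
          show ?thesis unfolding e integral_mult_right_zero by (simp add: a_def mult_ac)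
        qed
        finally show ?thesis using True unfolding \<Psi>_def p by simp
      next
        case False
        then show ?thesis using a0[OF False] unfolding \<Psi>_def k_def p by simp
      qed
    qed
    then show ?thesis unfolding innerS_def set_lebesgue_integral_def by simp
  qed
  define N where "N = (\<lambda>\<theta> s r. ennreal (norm (k \<theta> s r)))"
  have Nm3: "(\<lambda>x. N (fst (fst x)) (snd (fst x)) (snd x)) \<in> borel_measurable ((lborel \<Otimes>\<^sub>M lborel) \<Otimes>\<^sub>M lborel)"
  proof -
    have "(\<lambda>x. ennreal (norm (\<kappa> (fst (fst x), snd (fst x), snd x)))) \<in> borel_measurable (lborel \<Otimes>\<^sub>M lborel)"
      by (rule meas_cont_p[OF N\<kappa>m]) (auto intro!: continuous_intros)
    then show ?thesis unfolding N_def \<kappa>_def by (simp add: lborel_prod)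
  qed
  have Nm2: "(\<lambda>x. \<integral>\<^sup>+r. N (fst x) (snd x) r \<partial>lborel) \<in> borel_measurable (lborel \<Otimes>\<^sub>M lborel)"
    using lborel.borel_measurable_nn_integral[of "\<lambda>x r. N (fst x) (snd x) r" "lborel \<Otimes>\<^sub>M lborel"] Nm3
    by (simp add: case_prod_beta')
  have Nm1: "(\<lambda>\<theta>. \<integral>\<^sup>+s. \<integral>\<^sup>+r. N \<theta> s r \<partial>lborel \<partial>lborel) \<in> borel_measurable lborel"
    using lborel.borel_measurable_nn_integral[of "\<lambda>\<theta> s. \<integral>\<^sup>+r. N \<theta> s r \<partial>lborel" lborel] Nm2
    by (simp add: case_prod_beta')
  have Nslice: "(\<lambda>x. N \<theta> (fst x) (snd x)) \<in> borel_measurable (lborel \<Otimes>\<^sub>M lborel)" for \<theta>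
  proof -
    have "(\<lambda>x. ennreal (norm (\<kappa> (\<theta>, fst x, snd x)))) \<in> borel_measurable (lborel \<Otimes>\<^sub>M lborel)"
      by (rule meas_cont_p[OF N\<kappa>m]) (auto intro!: continuous_intros)
    then show ?thesis unfolding N_def \<kappa>_def by simp
  qed
  have kslice: "(\<lambda>x. k \<theta> (fst x) (snd x)) \<in> borel_measurable (lborel \<Otimes>\<^sub>M lborel)" for \<theta>
  proof -
    have "(\<lambda>x. \<kappa> (\<theta>, fst x, snd x)) \<in> borel_measurable (lborel \<Otimes>\<^sub>M lborel)"
      by (rule meas_cont_p[OF \<kappa>m]) (auto intro!: continuous_intros)
    then show ?thesis unfolding \<kappa>_def by simp
  qed
  define T3 where "T3 = (\<integral>\<^sup>+\<theta>. \<integral>\<^sup>+s. \<integral>\<^sup>+r. N \<theta> s r \<partial>lborel \<partial>lborel \<partial>lborel)"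
  have T3fin: "T3 < \<infinity>"
  proof -
    define W where "W = (\<integral>\<^sup>+x. ennreal ((w x)\<^sup>2) \<partial>lborel)"
    have Wfin: "W < \<infinity>" unfolding W_def by (rule nn_finite_sq[OF w2])
    define AA where "AA = (\<lambda>\<theta>. \<integral>\<^sup>+r. ennreal ((a (r, \<theta>))\<^sup>2) \<partial>lborel)"
    define GG where "GG = (\<lambda>\<theta>. \<integral>\<^sup>+s. ennreal ((g (s, \<theta>))\<^sup>2) \<partial>lborel)"
    have a2m: "(\<lambda>q. ennreal ((a q)\<^sup>2)) \<in> borel_measurable (lborel \<Otimes>\<^sub>M lborel)"
      unfolding lborel_prod using am by measurable
    have g2m: "(\<lambda>q. ennreal ((g q)\<^sup>2)) \<in> borel_measurable (lborel \<Otimes>\<^sub>M lborel)"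
      unfolding lborel_prod using gm by measurable
    have AAm: "AA \<in> borel_measurable lborel"
      unfolding AA_def using lborel.borel_measurable_nn_integral[of "\<lambda>\<theta> r. ennreal ((a (r, \<theta>))\<^sup>2)" lborel]
        measurable_compose[OF measurable_pair_swap' a2m] by (simp add: case_prod_beta')
    have GGm: "GG \<in> borel_measurable lborel"
      unfolding GG_def using lborel.borel_measurable_nn_integral[of "\<lambda>\<theta> r. ennreal ((g (r, \<theta>))\<^sup>2)" lborel]
        measurable_compose[OF measurable_pair_swap' g2m] by (simp add: case_prod_beta')
    have inner: "(\<integral>\<^sup>+s. \<integral>\<^sup>+r. N \<theta> s r \<partial>lborel \<partial>lborel) \<le> W * AA \<theta> + GG \<theta> * 2" for \<theta>
    proof -
      define X where "X = (\<lambda>s r. ennreal ((w (r - s))\<^sup>2) * ennreal ((a (r, \<theta>))\<^sup>2))"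
      define Y where "Y = (\<lambda>s r. ennreal ((g (s, \<theta>))\<^sup>2) * indicator {-1..1::real} r)"
      have Xm: "(\<lambda>x. X (fst x) (snd x)) \<in> borel_measurable (lborel \<Otimes>\<^sub>M lborel)"
        unfolding X_def by measurable
      have Ym: "(\<lambda>x. Y (fst x) (snd x)) \<in> borel_measurable (lborel \<Otimes>\<^sub>M lborel)"
        unfolding Y_def by measurable
      have Xm1: "(\<lambda>s. \<integral>\<^sup>+r. X s r \<partial>lborel) \<in> borel_measurable lborel"
        using lborel.borel_measurable_nn_integral[of X lborel] Xm by (simp add: case_prod_beta')
      have Ym1: "(\<lambda>s. \<integral>\<^sup>+r. Y s r \<partial>lborel) \<in> borel_measurable lborel"
        using lborel.borel_measurable_nn_integral[of Y lborel] Ym by (simp add: case_prod_beta')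
      have NXY: "N \<theta> s r \<le> X s r + Y s r" for s r
      proof (cases "r \<in> {-1..1}")
        case True
        have "N \<theta> s r = ennreal \<bar>(1/2) * (w (r - s) * a (r, \<theta>)) * g (s, \<theta>)\<bar>"
          unfolding N_def k_def by (simp add: mult.assoc)
        also have "\<dots> \<le> ennreal ((w (r - s) * a (r, \<theta>))\<^sup>2) + ennreal ((g (s, \<theta>))\<^sup>2)"
          by (rule amgm_ennreal)
        also have "\<dots> = X s r + Y s r"
          unfolding X_def Y_def using True by (simp add: power_mult_distrib ennreal_mult)
        finally show ?thesis .
      next
        case False
        then have "(r, \<theta>) \<notin> OmegaS" unfolding OmegaS_def by auto
        then show ?thesis unfolding N_def k_def using a0 by simp
      qed
      have "(\<integral>\<^sup>+s. \<integral>\<^sup>+r. N \<theta> s r \<partial>lborel \<partial>lborel) \<le> (\<integral>\<^sup>+s. \<integral>\<^sup>+r. X s r + Y s r \<partial>lborel \<partial>lborel)"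
        by (intro nn_integral_mono NXY)
      also have "\<dots> = (\<integral>\<^sup>+s. (\<integral>\<^sup>+r. X s r \<partial>lborel) + (\<integral>\<^sup>+r. Y s r \<partial>lborel) \<partial>lborel)"
        by (rule nn_integral_cong) (rule nn_integral_add; unfold X_def Y_def; measurable)
      also have "\<dots> = (\<integral>\<^sup>+s. \<integral>\<^sup>+r. X s r \<partial>lborel \<partial>lborel) + (\<integral>\<^sup>+s. \<integral>\<^sup>+r. Y s r \<partial>lborel \<partial>lborel)"
        by (rule nn_integral_add[OF Xm1 Ym1])
      also have "(\<integral>\<^sup>+s. \<integral>\<^sup>+r. X s r \<partial>lborel \<partial>lborel) = (\<integral>\<^sup>+r. \<integral>\<^sup>+s. X s r \<partial>lborel \<partial>lborel)"
        by (rule lborel_pair.Fubini'[symmetric]) (use Xm in \<open>simp add: case_prod_beta'\<close>)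
      also have "\<dots> = (\<integral>\<^sup>+r. W * ennreal ((a (r, \<theta>))\<^sup>2) \<partial>lborel)"
      proof (rule nn_integral_cong)
        fix r :: real
        have "(\<integral>\<^sup>+s. X s r \<partial>lborel) = (\<integral>\<^sup>+s. ennreal ((w (r - s))\<^sup>2) \<partial>lborel) * ennreal ((a (r, \<theta>))\<^sup>2)"
          unfolding X_def by (rule nn_integral_multc) measurable
        also have "(\<integral>\<^sup>+s. ennreal ((w (r - s))\<^sup>2) \<partial>lborel) = W"
          unfolding W_def by (rule nn_reflect_shift[of "\<lambda>x. ennreal ((w x)\<^sup>2)"]) measurable
        finally show "(\<integral>\<^sup>+s. X s r \<partial>lborel) = W * ennreal ((a (r, \<theta>))\<^sup>2)" by (simp add: mult.commute)
      qed
      also have "\<dots> = W * AA \<theta>"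
        unfolding AA_def by (rule nn_integral_cmult) measurable
      also have "(\<integral>\<^sup>+s. \<integral>\<^sup>+r. Y s r \<partial>lborel \<partial>lborel) = (\<integral>\<^sup>+s. ennreal ((g (s, \<theta>))\<^sup>2) * 2 \<partial>lborel)"
        unfolding Y_def by (rule nn_integral_cong) (simp add: nn_integral_cmult)
      also have "\<dots> = GG \<theta> * 2"
        unfolding GG_def by (rule nn_integral_multc) measurable
      finally show ?thesis .
    qed
    have "T3 \<le> (\<integral>\<^sup>+\<theta>. W * AA \<theta> + GG \<theta> * 2 \<partial>lborel)"
      unfolding T3_def by (intro nn_integral_mono inner)
    also have "\<dots> = W * (\<integral>\<^sup>+\<theta>. AA \<theta> \<partial>lborel) + (\<integral>\<^sup>+\<theta>. GG \<theta> \<partial>lborel) * 2"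
      using AAm GGm by (simp add: nn_integral_add nn_integral_cmult nn_integral_multc)
    also have "\<dots> < \<infinity>"
    proof -
      have "(\<integral>\<^sup>+\<theta>. AA \<theta> \<partial>lborel) = (\<integral>\<^sup>+q. ennreal ((a q)\<^sup>2) \<partial>lborel)"
        unfolding AA_def using lborel_pair.nn_integral_snd[OF a2m] by (simp add: lborel_prod)
      also have "\<dots> \<le> (\<integral>\<^sup>+q. ennreal (K\<^sup>2) * ennreal ((Radon h q)\<^sup>2) \<partial>lborel)"
      proof (rule nn_integral_mono)
        fix q :: "real \<times> real"
        have "\<bar>deriv E ((1/2) * Radon f q)\<bar>\<^sup>2 \<le> K\<^sup>2"
          by (rule power_mono[OF E'b]) simp
        then have "(a q)\<^sup>2 \<le> K\<^sup>2 * (Radon h q)\<^sup>2"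
          unfolding a_def by (simp add: power_mult_distrib mult_right_mono)
        then show "ennreal ((a q)\<^sup>2) \<le> ennreal (K\<^sup>2) * ennreal ((Radon h q)\<^sup>2)"
          by (simp add: ennreal_mult[symmetric] ennreal_leI)
      qed
      also have "\<dots> = ennreal (K\<^sup>2) * (\<integral>\<^sup>+q. ennreal ((Radon h q)\<^sup>2) \<partial>lborel)"
        by (rule nn_integral_cmult) (use Rhm in measurable)
      also have "\<dots> < \<infinity>"
        using nn_finite_sq[OF Radon_L2[OF hL]] by (simp add: ennreal_mult_less_top)
      finally have Af: "(\<integral>\<^sup>+\<theta>. AA \<theta> \<partial>lborel) < \<infinity>" .
      have "(\<integral>\<^sup>+\<theta>. GG \<theta> \<partial>lborel) = (\<integral>\<^sup>+q. ennreal ((g q)\<^sup>2) \<partial>lborel)"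
        unfolding GG_def using lborel_pair.nn_integral_snd[OF g2m] by (simp add: lborel_prod)
      also have "\<dots> < \<infinity>" by (rule nn_finite_sq) (use gL in \<open>auto simp: L2S_def\<close>)
      finally have Gf: "(\<integral>\<^sup>+\<theta>. GG \<theta> \<partial>lborel) < \<infinity>" .
      show ?thesis using Af Gf Wfin by (simp add: ennreal_mult_less_top)
    qed
    finally show ?thesis .
  qed
  have \<Phi>m: "\<Phi> \<in> borel_measurable (lborel \<Otimes>\<^sub>M lborel)"
  proof -
    have "(\<lambda>x. \<kappa> (snd (fst x), fst (fst x), snd x)) \<in> borel_measurable (lborel \<Otimes>\<^sub>M lborel)"
      by (rule meas_cont_p[OF \<kappa>m]) (auto intro!: continuous_intros)
    then have "(\<lambda>(p, r). k (snd p) (fst p) r) \<in> borel_measurable ((lborel \<Otimes>\<^sub>M lborel) \<Otimes>\<^sub>M lborel)"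
      unfolding \<kappa>_def by (simp add: lborel_prod case_prod_beta')
    then have "(\<lambda>p. \<integral>r. k (snd p) (fst p) r \<partial>lborel) \<in> borel_measurable (lborel \<Otimes>\<^sub>M lborel)"
      by (rule lborel.borel_measurable_lebesgue_integral)
    then show ?thesis unfolding \<Phi>_def by (simp add: case_prod_beta')
  qed
  have \<Phi>int: "integrable (lborel \<Otimes>\<^sub>M lborel) \<Phi>"
    unfolding integrable_iff_bounded
  proof (intro conjI \<Phi>m)
    have "(\<integral>\<^sup>+p. ennreal (norm (\<Phi> p)) \<partial>(lborel \<Otimes>\<^sub>M lborel)) \<le> (\<integral>\<^sup>+p. \<integral>\<^sup>+r. N (snd p) (fst p) r \<partial>lborel \<partial>(lborel \<Otimes>\<^sub>M lborel))"
      by (rule nn_integral_mono) (auto simp: \<Phi>_def N_def case_prod_beta' intro: norm_int_le_nn abs_int_le_nn)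
    also have "\<dots> = T3"
    proof -
      have m: "(\<lambda>p. \<integral>\<^sup>+r. N (snd p) (fst p) r \<partial>lborel) \<in> borel_measurable (lborel \<Otimes>\<^sub>M lborel)"
        using measurable_compose[OF measurable_pair_swap' Nm2] by (simp add: case_prod_beta')
      show ?thesis unfolding T3_def using lborel_pair.nn_integral_snd[OF m] by simp
    qed
    finally show "(\<integral>\<^sup>+p. ennreal (norm (\<Phi> p)) \<partial>(lborel \<Otimes>\<^sub>M lborel)) < \<infinity>" using T3fin by simp
  qed
  have \<Psi>m: "\<Psi> \<in> borel_measurable (lborel \<Otimes>\<^sub>M lborel)"
  proof -
    have "(\<lambda>x. \<kappa> (snd (fst x), snd x, fst (fst x))) \<in> borel_measurable (lborel \<Otimes>\<^sub>M lborel)"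
      by (rule meas_cont_p[OF \<kappa>m]) (auto intro!: continuous_intros)
    then have "(\<lambda>(p, s). k (snd p) s (fst p)) \<in> borel_measurable ((lborel \<Otimes>\<^sub>M lborel) \<Otimes>\<^sub>M lborel)"
      unfolding \<kappa>_def by (simp add: lborel_prod case_prod_beta')
    then have "(\<lambda>p. \<integral>s. k (snd p) s (fst p) \<partial>lborel) \<in> borel_measurable (lborel \<Otimes>\<^sub>M lborel)"
      by (rule lborel.borel_measurable_lebesgue_integral)
    then show ?thesis unfolding \<Psi>_def by (simp add: case_prod_beta')
  qed
  have \<Psi>int: "integrable (lborel \<Otimes>\<^sub>M lborel) \<Psi>"
    unfolding integrable_iff_bounded
  proof (intro conjI \<Psi>m)
    have "(\<integral>\<^sup>+p. ennreal (norm (\<Psi> p)) \<partial>(lborel \<Otimes>\<^sub>M lborel)) \<le> (\<integral>\<^sup>+p. \<integral>\<^sup>+s. N (snd p) s (fst p) \<partial>lborel \<partial>(lborel \<Otimes>\<^sub>M lborel))"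
      by (rule nn_integral_mono) (auto simp: \<Psi>_def N_def case_prod_beta' intro: norm_int_le_nn abs_int_le_nn)
    also have "\<dots> = (\<integral>\<^sup>+\<theta>. \<integral>\<^sup>+r. \<integral>\<^sup>+s. N \<theta> s r \<partial>lborel \<partial>lborel \<partial>lborel)"
    proof -
      have m3: "(\<lambda>x. N (snd (fst x)) (snd x) (fst (fst x))) \<in> borel_measurable ((lborel \<Otimes>\<^sub>M lborel) \<Otimes>\<^sub>M lborel)"
      proof -
        have "(\<lambda>x. ennreal (norm (\<kappa> (snd (fst x), snd x, fst (fst x))))) \<in> borel_measurable (lborel \<Otimes>\<^sub>M lborel)"
          by (rule meas_cont_p[OF N\<kappa>m]) (auto intro!: continuous_intros)
        then show ?thesis unfolding N_def \<kappa>_def by (simp add: lborel_prod)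
      qed
      have m: "(\<lambda>p. \<integral>\<^sup>+s. N (snd p) s (fst p) \<partial>lborel) \<in> borel_measurable (lborel \<Otimes>\<^sub>M lborel)"
        using lborel.borel_measurable_nn_integral[of "\<lambda>p s. N (snd p) s (fst p)" "lborel \<Otimes>\<^sub>M lborel"] m3
        by (simp add: case_prod_beta')
      show ?thesis using lborel_pair.nn_integral_snd[OF m] by simp
    qed
    also have "\<dots> = T3" unfolding T3_def
    proof (rule nn_integral_cong)
      fix \<theta> :: real
      show "(\<integral>\<^sup>+r. \<integral>\<^sup>+s. N \<theta> s r \<partial>lborel \<partial>lborel) = (\<integral>\<^sup>+s. \<integral>\<^sup>+r. N \<theta> s r \<partial>lborel \<partial>lborel)"
        by (rule lborel_pair.Fubini') (use Nslice[of \<theta>] in \<open>simp add: case_prod_beta'\<close>)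
    qed
    finally show "(\<integral>\<^sup>+p. ennreal (norm (\<Psi> p)) \<partial>(lborel \<Otimes>\<^sub>M lborel)) < \<infinity>" using T3fin by simp
  qed
  have AEfin: "AE \<theta> in lborel. (\<integral>\<^sup>+s. \<integral>\<^sup>+r. N \<theta> s r \<partial>lborel \<partial>lborel) \<noteq> \<infinity>"
    by (rule nn_integral_PInf_AE[OF Nm1]) (use T3fin in \<open>simp add: T3_def\<close>)
  have AEeq: "AE \<theta> in lborel. (\<integral>s. \<integral>r. k \<theta> s r \<partial>lborel \<partial>lborel) = (\<integral>r. \<integral>s. k \<theta> s r \<partial>lborel \<partial>lborel)"
    using AEfin
  proof eventually_elim
    case (elim \<theta>)
    have "integrable (lborel \<Otimes>\<^sub>M lborel) (\<lambda>x. k \<theta> (fst x) (snd x))"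
      unfolding integrable_iff_bounded
    proof (intro conjI kslice)
      have "(\<integral>\<^sup>+x. ennreal (norm (k \<theta> (fst x) (snd x))) \<partial>(lborel \<Otimes>\<^sub>M lborel)) = (\<integral>\<^sup>+s. \<integral>\<^sup>+r. N \<theta> s r \<partial>lborel \<partial>lborel)"
        using lborel.nn_integral_fst[OF Nslice[of \<theta>]] unfolding N_def by simp
      then show "(\<integral>\<^sup>+x. ennreal (norm (k \<theta> (fst x) (snd x))) \<partial>(lborel \<Otimes>\<^sub>M lborel)) < \<infinity>"
        using elim by (simp add: less_top)
    qed
    then have "integrable (lborel \<Otimes>\<^sub>M lborel) (case_prod (k \<theta>))" by (simp add: case_prod_beta')
    then show ?case by (rule lborel_pair.Fubini_integral[symmetric])
  qed
  have \<Phi>int': "integrable (lborel \<Otimes>\<^sub>M lborel) (case_prod (\<lambda>s \<theta>. \<Phi> (s, \<theta>)))" using \<Phi>int by simp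
  have \<Psi>int': "integrable (lborel \<Otimes>\<^sub>M lborel) (case_prod (\<lambda>r \<theta>. \<Psi> (r, \<theta>)))" using \<Psi>int by simp
  have "(\<integral>p. \<Phi> p \<partial>lborel) = (\<integral>\<theta>. \<integral>s. \<Phi> (s, \<theta>) \<partial>lborel \<partial>lborel)"
    using lborel_pair.integral_snd[OF \<Phi>int'] by (simp add: lborel_prod)
  also have "\<dots> = (\<integral>\<theta>. \<integral>r. \<Psi> (r, \<theta>) \<partial>lborel \<partial>lborel)"
  proof (rule integral_cong_AE)
    show "(\<lambda>\<theta>. \<integral>s. \<Phi> (s, \<theta>) \<partial>lborel) \<in> borel_measurable lborel"
      using lborel_pair.integrable_snd[OF \<Phi>int'] by auto
    show "(\<lambda>\<theta>. \<integral>r. \<Psi> (r, \<theta>) \<partial>lborel) \<in> borel_measurable lborel"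
      using lborel_pair.integrable_snd[OF \<Psi>int'] by auto
    show "AE \<theta> in lborel. (\<integral>s. \<Phi> (s, \<theta>) \<partial>lborel) = (\<integral>r. \<Psi> (r, \<theta>) \<partial>lborel)"
      using AEeq by (simp add: \<Phi>_def \<Psi>_def)
  qed
  also have "\<dots> = (\<integral>p. \<Psi> p \<partial>lborel)"
    using lborel_pair.integral_snd[OF \<Psi>int'] by (simp add: lborel_prod)
  finally show ?thesis using LHS RHS by simp
qed


theorem proposition3:
  fixes E w :: "real \<Rightarrow> real"
    and Rstar :: "(real \<times> real \<Rightarrow> real) \<Rightarrow> (real \<times> real \<Rightarrow> real)"
    and f :: "real \<times> real \<Rightarrow> real"
  assumes E_diff: "\<forall>x. E differentiable (at x)"
    and E'_diff: "\<forall>x. deriv E differentiable (at x)"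
    and E''_cont: "continuous_on UNIV (deriv (deriv E))"
    and E_exp: "\<forall>x\<ge>0. E x = exp (- x)"
    and E_bdd: "bounded (range E)"
    and E'_bdd: "bounded (range (deriv E))"
    and E''_bdd: "bounded (range (deriv (deriv E)))"
    and w_meas: "w \<in> borel_measurable lborel"
    and w_L1: "integrable lborel w"
    and w_L2: "integrable lborel (\<lambda>x. (w x)\<^sup>2)"
    and Rstar_adj: "is_adjoint Radon Rstar"
    and f_L2: "L2D f"
  shows "is_adjoint (Fderiv E w f) (\<lambda>g. Rstar (adj_arg E w f g))"
proof -
  have "continuous_on UNIV (deriv E)"
    using E'_diff by (simp add: continuous_at_imp_continuous_on differentiable_imp_continuous_within)
  then have E'm: "deriv E \<in> borel_measurable borel"
    by (rule borel_measurable_continuous_onI)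
  obtain K where K: "\<And>x. \<bar>deriv E x\<bar> \<le> K"
    using E'_bdd unfolding bounded_iff by auto
  have wm: "w \<in> borel_measurable borel" using w_meas by simp
  have R1: "\<And>g. L2S g \<Longrightarrow> L2D (Rstar g)" and
       R2: "\<And>h g. L2D h \<Longrightarrow> L2S g \<Longrightarrow> innerS (Radon h) g = innerD h (Rstar g)"
    using Rstar_adj unfolding is_adjoint_def by auto
  have adjL: "\<And>g. L2S g \<Longrightarrow> L2S (adj_arg E w f g)"
    by (rule adj_L2S[OF E'm K wm w_L2 f_L2])
  show ?thesis
    unfolding is_adjoint_def
  proof (intro conjI allI impI)
    fix g assume "L2S g"
    then show "L2D (Rstar (adj_arg E w f g))" using R1 adjL by blast
  next
    fix h g assume h: "L2D h" and g: "L2S g"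
    have "innerS (Fderiv E w f h) g = innerS (Radon h) (adj_arg E w f g)"
      by (rule main_eq[OF E'm K wm w_L2 f_L2 h g])
    also have "\<dots> = innerD h (Rstar (adj_arg E w f g))"
      by (rule R2[OF h adjL[OF g]])
    finally show "innerS (Fderiv E w f h) g = innerD h (Rstar (adj_arg E w f g))" .
  qed
qed

end
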